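(* Let $d\ge 0$ be an integer. Every triangle-free graph $G$ with $\mathrm{tww}(G)\le d$ admits a proper vertex coloring with at most $d+2$ colors.
   Context: A trigraph $H$ consists of a vertex set $V(H)$ and two disjoint sets of unordered pairs of distinct vertices: black edges $E(H)$ and red edges $R(H)$. Two vertices are adjacent (neighbors) if they are joined by a black or a red edge. The red graph of $H$ is the graph $(V(H),R(H))$; $H$ is a $d$-trigraph if its red graph has maximum degree at most $d$. A graph is a trigraph with no red edges. Contracting two distinct vertices $u,v$ of a trigraph $H$ yields the trigraph obtained by deleting $u$ and $v$ and adding a new vertex $z$ such that, for every other vertex $x$: $zx$ is a black edge if both $ux$ and $vx$ are black edges; $zx$ is not an edge if $x$ is adjacent to neither $u$ nor $v$; and $zx$ is a red edge otherwise. All edges not incident to $u$ or $v$ are unchanged. A $d$-sequence of an $n$-vertex graph $G$ is a sequence of $d$-trigraphs $G=G_n,G_{n-1},\dots,G_1$ such that $G_1$ has a single vertex and each $G_{i-1}$ is obtained from $G_i$ by one contraction (so $G_i$ has $i$ vertices). The twin-width $\mathrm{tww}(G)$ of $G$ is the minimum $d$ such that $G$ admits a $d$-sequence. *)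

theory Defs
  imports Main
begin

type_synonym 'a trigraph = "'a set \<times> 'a set set \<times> 'a set set"

definition tV :: "'a trigraph \<Rightarrow> 'a set" where "tV H = fst H"
definition tB :: "'a trigraph \<Rightarrow> 'a set set" where "tB H = fst (snd H)"
definition tR :: "'a trigraph \<Rightarrow> 'a set set" where "tR H = snd (snd H)"

definition is_trigraph :: "'a trigraph \<Rightarrow> bool" where
  "is_trigraph H \<longleftrightarrow> finite (tV H)
     \<and> tB H \<subseteq> {{x, y} | x y. x \<in> tV H \<and> y \<in> tV H \<and> x \<noteq> y}
     \<and> tR H \<subseteq> {{x, y} | x y. x \<in> tV H \<and> y \<in> tV H \<and> x \<noteq> y}
     \<and> tB H \<inter> tR H = {}"

definition red_degree :: "'a trigraph \<Rightarrow> 'a \<Rightarrow> nat" where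
  "red_degree H x = card {y. {x, y} \<in> tR H}"

definition is_d_trigraph :: "nat \<Rightarrow> 'a trigraph \<Rightarrow> bool" where
  "is_d_trigraph d H \<longleftrightarrow> is_trigraph H \<and> (\<forall>x \<in> tV H. red_degree H x \<le> d)"

text \<open>H' is obtained from H by contracting distinct u, v into a new vertex z
  (z must not clash with the remaining vertices; the name of z is immaterial).\<close>
definition contraction :: "'a trigraph \<Rightarrow> 'a \<Rightarrow> 'a \<Rightarrow> 'a \<Rightarrow> 'a trigraph \<Rightarrow> bool" where
  "contraction H u v z H' \<longleftrightarrow>
     u \<in> tV H \<and> v \<in> tV H \<and> u \<noteq> v \<and> z \<notin> tV H - {u, v} \<and>
     tV H' = insert z (tV H - {u, v}) \<and>
     tB H' = {e \<in> tB H. u \<notin> e \<and> v \<notin> e}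
             \<union> {{z, x} | x. x \<in> tV H - {u, v} \<and> {u, x} \<in> tB H \<and> {v, x} \<in> tB H} \<and>
     tR H' = {e \<in> tR H. u \<notin> e \<and> v \<notin> e}
             \<union> {{z, x} | x. x \<in> tV H - {u, v}
                   \<and> ({u, x} \<in> tB H \<union> tR H \<or> {v, x} \<in> tB H \<union> tR H)
                   \<and> \<not> ({u, x} \<in> tB H \<and> {v, x} \<in> tB H)}"

definition is_graph :: "'a set \<Rightarrow> 'a set set \<Rightarrow> bool" where
  "is_graph V E \<longleftrightarrow> is_trigraph (V, E, {})"

definition d_sequence :: "nat \<Rightarrow> 'a set \<Rightarrow> 'a set set \<Rightarrow> (nat \<Rightarrow> 'a trigraph) \<Rightarrow> bool" where
  "d_sequence d V E S \<longleftrightarrow>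
     (let n = card V in
       S n = (V, E, {}) \<and>
       card (tV (S 1)) = 1 \<and>
       (\<forall>i \<in> {1..n}. is_d_trigraph d (S i)) \<and>
       (\<forall>i \<in> {2..n}. \<exists>u v z. contraction (S i) u v z (S (i - 1))))"

definition tww :: "'a set \<Rightarrow> 'a set set \<Rightarrow> nat" where
  "tww V E = (LEAST d. \<exists>S. d_sequence d V E S)"

definition triangle_free :: "'a set \<Rightarrow> 'a set set \<Rightarrow> bool" where
  "triangle_free V E \<longleftrightarrow>
     \<not> (\<exists>x y z. {x, y} \<in> E \<and> {y, z} \<in> E \<and> {x, z} \<in> E)"

definition proper_coloring :: "'a set \<Rightarrow> 'a set set \<Rightarrow> ('a \<Rightarrow> nat) \<Rightarrow> bool" where
  "proper_coloring V E c \<longleftrightarrow> (\<forall>x \<in> V. \<forall>y \<in> V. {x, y} \<in> E \<longrightarrow> c x \<noteq> c y)"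

end

theory Submission imports Defs begin

definition TF :: "'a trigraph \<Rightarrow> bool" where
 "TF H \<longleftrightarrow> (\<forall>x y w. {x,y} \<in> tB H \<longrightarrow> {x,w} \<in> tB H \<longrightarrow> {y,w} \<notin> tB H \<union> tR H)"

definition col :: "nat \<Rightarrow> 'a trigraph \<Rightarrow> ('a \<Rightarrow> nat) \<Rightarrow> bool" where
 "col d H c \<longleftrightarrow> (\<forall>x\<in>tV H. \<forall>y\<in>tV H. {x,y} \<in> tB H \<union> tR H \<longrightarrow> c x \<noteq> c y) \<and> (\<forall>x\<in>tV H. c x \<le> d+1)"

lemma trig_edge:
  assumes "is_trigraph H" "{x,y} \<in> tB H \<union> tR H"
  shows "x \<noteq> y" "x \<in> tV H" "y \<in> tV H"
  using assms by (auto simp: is_trigraph_def doubleton_eq_iff)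

lemma trig_contr:
  assumes C: "contraction H u v z H'" and T: "is_trigraph H"
  shows "is_trigraph H'"
proof -
  have V': "tV H' = insert z (tV H - {u,v})" and zn: "z \<notin> tV H - {u,v}"
    using C unfolding contraction_def by auto
  have fin: "finite (tV H')" using V' T by (simp add: is_trigraph_def)
  have P1: "e \<in> {{x, y} | x y. x \<in> tV H' \<and> y \<in> tV H' \<and> x \<noteq> y}"
    if h: "e \<in> tB H \<union> tR H" "u \<notin> e" "v \<notin> e" for e
  proof -
    obtain x y where e: "e = {x,y}" "x \<in> tV H" "y \<in> tV H" "x \<noteq> y"
      using h(1) T unfolding is_trigraph_def by blast
    then show ?thesis using h V' by auto
  qed
  have P2: "{z,x} \<in> {{x, y} | x y. x \<in> tV H' \<and> y \<in> tV H' \<and> x \<noteq> y}"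
    if "x \<in> tV H - {u,v}" for x
    using that V' zn by blast
  have B: "tB H' \<subseteq> {{x, y} | x y. x \<in> tV H' \<and> y \<in> tV H' \<and> x \<noteq> y}"
  proof
    fix e assume "e \<in> tB H'"
    then have "(e \<in> tB H \<and> u \<notin> e \<and> v \<notin> e) \<or> (\<exists>x. e = {z,x} \<and> x \<in> tV H - {u,v})"
      using C unfolding contraction_def by blast
    then show "e \<in> {{x, y} | x y. x \<in> tV H' \<and> y \<in> tV H' \<and> x \<noteq> y}"
      using P1 P2 by blast
  qed
  have R: "tR H' \<subseteq> {{x, y} | x y. x \<in> tV H' \<and> y \<in> tV H' \<and> x \<noteq> y}"
  proof
    fix e assume "e \<in> tR H'"
    then have "(e \<in> tR H \<and> u \<notin> e \<and> v \<notin> e) \<or> (\<exists>x. e = {z,x} \<and> x \<in> tV H - {u,v})"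
      using C unfolding contraction_def by blast
    then show "e \<in> {{x, y} | x y. x \<in> tV H' \<and> y \<in> tV H' \<and> x \<noteq> y}"
      using P1 P2 by blast
  qed
  have D: "tB H' \<inter> tR H' = {}"
  proof (rule ccontr)
    assume "tB H' \<inter> tR H' \<noteq> {}"
    then obtain e where eB: "e \<in> tB H'" and eR: "e \<in> tR H'" by blast
    have dj: "tB H \<inter> tR H = {}" using T unfolding is_trigraph_def by blast
    show False
    proof (cases "z \<in> e \<and> u \<notin> e \<and> v \<notin> e \<and> e \<in> tB H \<union> tR H")
      case True
      then obtain x y where "e = {x,y}" "x \<in> tV H" "y \<in> tV H"
        using T unfolding is_trigraph_def by blast
      then show False using True zn by auto
    next
      case False
      have b: "(e \<in> tB H \<and> u \<notin> e \<and> v \<notin> e) \<or> (\<exists>x. e = {z,x} \<and> x \<in> tV H - {u,v} \<and> {u, x} \<in> tB H \<and> {v, x} \<in> tB H)"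
        using eB C unfolding contraction_def by blast
      have r: "(e \<in> tR H \<and> u \<notin> e \<and> v \<notin> e) \<or> (\<exists>x. e = {z,x} \<and> x \<in> tV H - {u,v} \<and> \<not> ({u, x} \<in> tB H \<and> {v, x} \<in> tB H))"
        using eR C unfolding contraction_def by blast
      show False using b r False dj by (auto simp: doubleton_eq_iff)
    qed
  qed
  show ?thesis using fin B R D unfolding is_trigraph_def by blast
qed

lemma L1B:
  assumes "contraction H u v z H'" "is_trigraph H" "s \<noteq> z" "t \<noteq> z"
  shows "{s,t} \<in> tB H' \<longleftrightarrow> {s,t} \<in> tB H \<and> s \<notin> {u,v} \<and> t \<notin> {u,v}"
  using assms unfolding contraction_def by (auto simp: doubleton_eq_iff)

lemma L1R:
  assumes "contraction H u v z H'" "is_trigraph H" "s \<noteq> z" "t \<noteq> z"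
  shows "{s,t} \<in> tR H' \<longleftrightarrow> {s,t} \<in> tR H \<and> s \<notin> {u,v} \<and> t \<notin> {u,v}"
  using assms unfolding contraction_def by (auto simp: doubleton_eq_iff)

lemma L2:
  assumes "contraction H u v z H'" "is_trigraph H" "t \<noteq> z"
  shows "{z,t} \<in> tB H' \<longleftrightarrow> t \<in> tV H - {u,v} \<and> {u,t} \<in> tB H \<and> {v,t} \<in> tB H"
proof -
  have "\<not> ({z,t} \<in> tB H \<and> u \<notin> {z,t} \<and> v \<notin> {z,t})"
    using assms trig_edge[of H z t] unfolding contraction_def by auto
  then show ?thesis using assms unfolding contraction_def by (auto simp: doubleton_eq_iff)
qed

lemma L3:
  assumes "contraction H u v z H'" "is_trigraph H" "t \<noteq> z"
  shows "{z,t} \<in> tB H' \<union> tR H' \<longleftrightarrow> t \<in> tV H - {u,v} \<and> ({u,t} \<in> tB H \<union> tR H \<or> {v,t} \<in> tB H \<union> tR H)"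
proof -
  have "\<not> ({z,t} \<in> tB H \<union> tR H \<and> u \<notin> {z,t} \<and> v \<notin> {z,t})"
    using assms trig_edge[of H z t] unfolding contraction_def by auto
  then show ?thesis using assms unfolding contraction_def by (auto simp: doubleton_eq_iff)
qed

lemma TF_contr:
  assumes C: "contraction H u v z H'" and T: "is_trigraph H" and T': "is_trigraph H'"
    and F: "TF H"
  shows "TF H'"
  unfolding TF_def
proof (intro allI impI notI)
  fix x y w
  assume b1: "{x,y} \<in> tB H'" and b2: "{x,w} \<in> tB H'" and a3: "{y,w} \<in> tB H' \<union> tR H'"
  have d: "x \<noteq> y" "x \<noteq> w" "y \<noteq> w"
    using trig_edge[OF T'] b1 b2 a3 by blast+
  have FF: "\<And>a b c. {a,b} \<in> tB H \<Longrightarrow> {a,c} \<in> tB H \<Longrightarrow> {b,c} \<in> tB H \<union> tR H \<Longrightarrow> False"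
    using F unfolding TF_def by blast
  show False
  proof (cases "x = z")
    case True
    then have "y \<noteq> z" "w \<noteq> z" using d by auto
    then have "{u,y} \<in> tB H" "{u,w} \<in> tB H" "{y,w} \<in> tB H \<union> tR H"
      using L2[OF C T, of y] L2[OF C T, of w] L1B[OF C T, of y w] L1R[OF C T, of y w] b1 b2 a3 True
      by auto
    then show False using FF by blast
  next
    case xz: False
    show False
    proof (cases "y = z")
      case True
      then have "w \<noteq> z" using d by auto
      have "{z,x} \<in> tB H'" using b1 True by (simp add: insert_commute)
      then have ux: "{x,u} \<in> tB H" "{x,v} \<in> tB H"
        using L2[OF C T, of x] xz by (auto simp: insert_commute)
      have xw: "{x,w} \<in> tB H" using L1B[OF C T, of x w] b2 xz \<open>w \<noteq> z\<close> by auto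
      have "{u,w} \<in> tB H \<union> tR H \<or> {v,w} \<in> tB H \<union> tR H"
        using L3[OF C T, of w] a3 True \<open>w \<noteq> z\<close> by auto
      then show False using FF ux xw by blast
    next
      case yz: False
      show False
      proof (cases "w = z")
        case True
        have "{z,x} \<in> tB H'" using b2 True by (simp add: insert_commute)
        then have ux: "{x,u} \<in> tB H" "{x,v} \<in> tB H"
          using L2[OF C T, of x] xz by (auto simp: insert_commute)
        have xy: "{x,y} \<in> tB H" using L1B[OF C T, of x y] b1 xz yz by auto
        have "{z,y} \<in> tB H' \<union> tR H'" using a3 True by (simp add: insert_commute)
        then have "{u,y} \<in> tB H \<union> tR H \<or> {v,y} \<in> tB H \<union> tR H"
          using L3[OF C T, of y] yz by auto
        then show False using FF[of x u y] FF[of x v y] ux xy by blast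
      next
        case wz: False
        have "{x,y} \<in> tB H" "{x,w} \<in> tB H" "{y,w} \<in> tB H \<union> tR H"
          using L1B[OF C T] L1R[OF C T] b1 b2 a3 xz yz wz by auto
        then show False using FF by blast
      qed
    qed
  qed
qed

lemma red_fin:
  assumes "is_trigraph H"
  shows "finite {y. {x, y} \<in> tR H}"
proof -
  have "{y. {x, y} \<in> tR H} \<subseteq> tV H" using trig_edge[OF assms] by blast
  moreover have "finite (tV H)" using assms unfolding is_trigraph_def by blast
  ultimately show ?thesis using finite_subset by blast
qed

lemma col_step:
  assumes C: "contraction H u v z H'" and T: "is_trigraph H" and T': "is_trigraph H'"
    and F: "TF H" and D: "is_d_trigraph d H'" and c': "col d H' c'"
  shows "\<exists>c. col d H c"
proof -
  have V': "tV H' = insert z (tV H - {u,v})" and zn: "z \<notin> tV H - {u,v}"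
    and uv: "u \<in> tV H" "v \<in> tV H" "u \<noteq> v"
    using C unfolding contraction_def by auto
  have cp: "\<And>x y. x \<in> tV H' \<Longrightarrow> y \<in> tV H' \<Longrightarrow> {x,y} \<in> tB H' \<union> tR H' \<Longrightarrow> c' x \<noteq> c' y"
    and cb: "\<And>x. x \<in> tV H' \<Longrightarrow> c' x \<le> d+1"
    using c' unfolding col_def by blast+
  define Nv where "Nv = {x \<in> tV H - {u,v}. {v,x} \<in> tB H \<union> tR H}"
  define A where "A = insert (c' z) (c' ` Nv)"
  have "\<exists>k. k \<le> d+1 \<and> k \<notin> A" if adj: "{u,v} \<in> tB H \<union> tR H"
  proof -
    have sub: "Nv \<subseteq> {y. {z, y} \<in> tR H'}"
    proof
      fix x assume x: "x \<in> Nv"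
      then have xz: "x \<noteq> z" using zn unfolding Nv_def by auto
      have a: "{z,x} \<in> tB H' \<union> tR H'" using L3[OF C T xz] x unfolding Nv_def by auto
      have "{z,x} \<notin> tB H'"
      proof
        assume "{z,x} \<in> tB H'"
        then have "{x,u} \<in> tB H" "{x,v} \<in> tB H" using L2[OF C T xz] by (auto simp: insert_commute)
        then show False using F adj unfolding TF_def by blast
      qed
      then show "x \<in> {y. {z, y} \<in> tR H'}" using a by auto
    qed
    have "z \<in> tV H'" using V' by auto
    then have "red_degree H' z \<le> d" using D unfolding is_d_trigraph_def by blast
    then have "card Nv \<le> d" using card_mono[OF red_fin[OF T'] sub] unfolding red_degree_def by linarith
    moreover have "finite Nv" using finite_subset[OF sub red_fin[OF T']] .
    ultimately have c1: "card (c' ` Nv) \<le> d" using card_image_le[of Nv c'] by linarith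
    have finA: "finite A" unfolding A_def using \<open>finite Nv\<close> by simp
    have "card A \<le> Suc (card (c' ` Nv))" unfolding A_def
      using \<open>finite Nv\<close> by (simp add: card_insert_if)
    then have "card A < card {..d+1}" using c1 by simp
    have "\<not> {..d+1} \<subseteq> A"
    proof
      assume "{..d+1} \<subseteq> A"
      then have "card {..d+1} \<le> card A" by (rule card_mono[OF finA])
      then show False using \<open>card A < card {..d+1}\<close> by linarith
    qed
    then show ?thesis by auto
  qed
  note ex = this
  obtain k where k: "{u,v} \<in> tB H \<union> tR H \<Longrightarrow> k \<le> d+1 \<and> k \<notin> A"
  proof (cases "{u,v} \<in> tB H \<union> tR H")
    case True
    then obtain k where "k \<le> d+1 \<and> k \<notin> A" using ex by blast
    then show ?thesis using that by blast
  next
    case False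
    then show ?thesis using that by blast
  qed
  define c where "c x = (if x = u then c' z else if x = v then
     (if {u,v} \<in> tB H \<union> tR H then k else c' z) else c' x)" for x
  have zV: "z \<in> tV H'" using V' by auto
  have oth: "c t = c' t" "t \<in> tV H'" "t \<noteq> z" if "t \<in> tV H - {u,v}" for t
    using that V' zn unfolding c_def by auto
  have cu: "c u = c' z" unfolding c_def by simp
  have cv: "c v = (if {u,v} \<in> tB H \<union> tR H then k else c' z)" unfolding c_def using uv by simp
  have nu: "c u \<noteq> c t" if "t \<in> tV H - {u,v}" "{u,t} \<in> tB H \<union> tR H" for t
  proof -
    have "{z,t} \<in> tB H' \<union> tR H'" using L3[OF C T oth(3)[OF that(1)]] that by auto
    then show ?thesis using cp[OF zV oth(2)[OF that(1)]] cu oth(1)[OF that(1)] by simp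
  qed
  have nv: "c v \<noteq> c t" if "t \<in> tV H - {u,v}" "{v,t} \<in> tB H \<union> tR H" for t
  proof (cases "{u,v} \<in> tB H \<union> tR H")
    case True
    then have "t \<in> Nv" using that unfolding Nv_def by auto
    then show ?thesis using k[OF True] cv True oth(1)[OF that(1)] unfolding A_def by auto
  next
    case False
    have "{z,t} \<in> tB H' \<union> tR H'" using L3[OF C T oth(3)[OF that(1)]] that by auto
    then show ?thesis using cp[OF zV oth(2)[OF that(1)]] cv False oth(1)[OF that(1)] by simp
  qed
  have nuv: "c u \<noteq> c v" if "{u,v} \<in> tB H \<union> tR H"
    using k[OF that] cu cv that unfolding A_def by auto
  have proper: "c x \<noteq> c y" if xy: "x \<in> tV H" "y \<in> tV H" "{x,y} \<in> tB H \<union> tR H" for x y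
  proof -
    have ne: "x \<noteq> y" using trig_edge[OF T xy(3)] by blast
    show ?thesis
    proof (cases "x \<in> {u,v}")
      case True
      show ?thesis
      proof (cases "y \<in> {u,v}")
        case True
        then show ?thesis using \<open>x \<in> {u,v}\<close> ne nuv xy(3) by (auto simp: insert_commute)
      next
        case False
        then show ?thesis using \<open>x \<in> {u,v}\<close> nu nv xy by auto
      qed
    next
      case xn: False
      show ?thesis
      proof (cases "y \<in> {u,v}")
        case True
        have "{y,x} \<in> tB H \<union> tR H" using xy(3) by (simp add: insert_commute)
        then show ?thesis using True xn nu nv xy by fastforce
      next
        case False
        have "{x,y} \<in> tB H' \<union> tR H'"
          using L1B[OF C T, of x y] L1R[OF C T, of x y] xy xn False oth[of x] oth[of y] by auto
        then show ?thesis using cp oth[of x] oth[of y] xy xn False by auto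
      qed
    qed
  qed
  have bnd: "c x \<le> d+1" if "x \<in> tV H" for x
  proof -
    have "c' z \<le> d + 1" using cb zV .
    moreover have "x \<in> tV H - {u,v} \<Longrightarrow> c x \<le> d+1" using cb oth by metis
    ultimately show ?thesis using k cu cv that by (cases "x = u"; cases "x = v") (auto simp: A_def)
  qed
  show ?thesis using proper bnd unfolding col_def by blast
qed

lemma seq_exists:
  "is_trigraph H \<Longrightarrow> card (tV H) = k \<Longrightarrow> k \<ge> 1 \<Longrightarrow>
   \<exists>S. S k = H \<and> (\<forall>i\<in>{1..k}. is_trigraph (S i) \<and> card (tV (S i)) = i)
     \<and> (\<forall>i\<in>{2..k}. \<exists>u v z. contraction (S i) u v z (S (i-1)))"
proof (induction k arbitrary: H)
  case 0
  then show ?case by simp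
next
  case (Suc k)
  show ?case
  proof (cases "k = 0")
    case True
    then show ?thesis using Suc.prems by (intro exI[of _ "\<lambda>_. H"]) auto
  next
    case False
    have fin: "finite (tV H)" using Suc.prems unfolding is_trigraph_def by blast
    have "tV H \<noteq> {}" using Suc.prems by auto
    then obtain u where u: "u \<in> tV H" by blast
    have "card (tV H - {u}) = k" using Suc.prems u fin by simp
    then have "tV H - {u} \<noteq> {}"
    proof (intro notI)
      assume "tV H - {u} = {}"
      from \<open>card (tV H - {u}) = k\<close> have "card ({}::'a set) = k" unfolding \<open>tV H - {u} = {}\<close> .
      then show False using False by simp
    qed
    then obtain v where v: "v \<in> tV H" "v \<noteq> u" by blast
    define H' where "H' = (insert u (tV H - {u,v}),
       {e \<in> tB H. u \<notin> e \<and> v \<notin> e} \<union> {{u, x} | x. x \<in> tV H - {u, v} \<and> {u, x} \<in> tB H \<and> {v, x} \<in> tB H},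
       {e \<in> tR H. u \<notin> e \<and> v \<notin> e} \<union> {{u, x} | x. x \<in> tV H - {u, v}
                   \<and> ({u, x} \<in> tB H \<union> tR H \<or> {v, x} \<in> tB H \<union> tR H)
                   \<and> \<not> ({u, x} \<in> tB H \<and> {v, x} \<in> tB H)})"
    have C: "contraction H u v u H'"
      using u v unfolding contraction_def H'_def tV_def tB_def tR_def by simp
    have T': "is_trigraph H'" using trig_contr[OF C Suc.prems(1)] .
    have "card (tV H - {u,v}) = Suc k - 2" using fin u v Suc.prems(2)
      by (simp add: card_Diff_subset)
    then have cH': "card (tV H') = k" using fin False unfolding H'_def tV_def by simp
    obtain S' where S': "S' k = H'" "\<forall>i\<in>{1..k}. is_trigraph (S' i) \<and> card (tV (S' i)) = i"
      "\<forall>i\<in>{2..k}. \<exists>u v z. contraction (S' i) u v z (S' (i-1))"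
      using Suc.IH[OF T' cH'] False by auto
    define S where "S = S'(Suc k := H)"
    have "\<forall>i\<in>{1..Suc k}. is_trigraph (S i) \<and> card (tV (S i)) = i"
      using S'(2) Suc.prems unfolding S_def by (auto simp: le_Suc_eq)
    moreover have "\<forall>i\<in>{2..Suc k}. \<exists>u v z. contraction (S i) u v z (S (i-1))"
    proof
      fix i assume i: "i \<in> {2..Suc k}"
      show "\<exists>u v z. contraction (S i) u v z (S (i-1))"
      proof (cases "i = Suc k")
        case True
        then show ?thesis using C S'(1) False unfolding S_def by auto
      next
        case False
        then show ?thesis using S'(3) i unfolding S_def by auto
      qed
    qed
    moreover have "S (Suc k) = H" unfolding S_def by simp
    ultimately show ?thesis by blast
  qed
qed

lemma red_le:
  assumes "is_trigraph H"
  shows "red_degree H x \<le> card (tV H)"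
proof -
  have "{y. {x, y} \<in> tR H} \<subseteq> tV H" using trig_edge[OF assms] by blast
  moreover have "finite (tV H)" using assms unfolding is_trigraph_def by blast
  ultimately show ?thesis unfolding red_degree_def by (simp add: card_mono)
qed

theorem mainTheorem9:
  fixes V :: "'a set" and E :: "'a set set" and d :: nat
  assumes "is_graph V E"
    and "triangle_free V E"
    and "tww V E \<le> d"
  shows "\<exists>c :: 'a \<Rightarrow> nat. proper_coloring V E c \<and> card (c ` V) \<le> d + 2"
proof (cases "V = {}")
  case True
  then show ?thesis by (intro exI[of _ "\<lambda>_. 0"]) (simp add: proper_coloring_def)
next
  case Vne: False
  define n where "n = card V"
  have G: "is_trigraph (V, E, {})" using assms(1) unfolding is_graph_def .
  have finV: "finite V" using G unfolding is_trigraph_def tV_def by simp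
  have n1: "n \<ge> 1" using finV Vne unfolding n_def by (simp add: Suc_le_eq card_gt_0_iff)
  obtain S0 where S0: "S0 n = (V, E, {})" "\<forall>i\<in>{1..n}. is_trigraph (S0 i) \<and> card (tV (S0 i)) = i"
      "\<forall>i\<in>{2..n}. \<exists>u v z. contraction (S0 i) u v z (S0 (i-1))"
    using seq_exists[OF G _ n1] unfolding n_def tV_def by auto
  have "d_sequence n V E S0"
  proof -
    have "\<forall>i\<in>{1..n}. is_d_trigraph n (S0 i)"
    proof
      fix i assume i: "i \<in> {1..n}"
      then have t: "is_trigraph (S0 i)" and ci: "card (tV (S0 i)) = i" using S0(2) by auto
      have "red_degree (S0 i) x \<le> n" for x
      proof -
        have "red_degree (S0 i) x \<le> i" using red_le[OF t, of x] ci by simp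
        then show ?thesis using i by simp
      qed
      then show "is_d_trigraph n (S0 i)" unfolding is_d_trigraph_def using t by blast
    qed
    then show ?thesis unfolding d_sequence_def Let_def n_def[symmetric] using S0 n1 by auto
  qed
  then have ex: "\<exists>dd. \<exists>S. d_sequence dd V E S" by blast
  have "\<exists>S. d_sequence (tww V E) V E S" unfolding tww_def by (rule LeastI_ex[OF ex])
  then obtain S where S: "d_sequence (tww V E) V E S" by blast
  have Sn: "S n = (V, E, {})" and S1: "card (tV (S 1)) = 1"
    and Sd: "\<And>i. i \<in> {1..n} \<Longrightarrow> is_d_trigraph (tww V E) (S i)"
    and Sc: "\<And>i. i \<in> {2..n} \<Longrightarrow> \<exists>u v z. contraction (S i) u v z (S (i-1))"
    using S unfolding d_sequence_def Let_def n_def by auto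
  have St: "is_trigraph (S i)" if "i \<in> {1..n}" for i using Sd[OF that] unfolding is_d_trigraph_def by blast
  have Sdd: "is_d_trigraph d (S i)" if "i \<in> {1..n}" for i
    using Sd[OF that] assms(3) unfolding is_d_trigraph_def by auto
  have TFn: "\<forall>j. j < n \<longrightarrow> TF (S (n - j))"
  proof
    fix j show "j < n \<longrightarrow> TF (S (n - j))"
    proof (induction j)
      case 0
      have G0: "TF (V, E, {})" unfolding TF_def tB_def tR_def
      proof (intro allI impI notI)
        fix x y w assume "{x, y} \<in> fst (snd (V, E, {}::'a set set))" "{x, w} \<in> fst (snd (V, E, {}::'a set set))"
           "{y, w} \<in> fst (snd (V, E, {}::'a set set)) \<union> snd (snd (V, E, {}::'a set set))"
        then have "{y,x} \<in> E" "{x,w} \<in> E" "{y,w} \<in> E" by (auto simp: insert_commute)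
        then show False using assms(2) unfolding triangle_free_def by blast
      qed
      show ?case using G0 Sn by simp
    next
      case (Suc j)
      show ?case
      proof
        assume j: "Suc j < n"
        then have TFj: "TF (S (n - j))" using Suc.IH by simp
        have i: "n - j \<in> {2..n}" using j by auto
        obtain u v z where C: "contraction (S (n - j)) u v z (S (n - j - 1))" using Sc[OF i] by blast
        have "n - j - 1 \<in> {1..n}" using j by auto
        then have t2: "is_trigraph (S (n - j - 1))" using St by blast
        have t1: "is_trigraph (S (n - j))" using St i by simp
        have "TF (S (n - j - 1))" using TF_contr[OF C t1 t2 TFj] .
        then show "TF (S (n - Suc j))" by simp
      qed
    qed
  qed
  have TFi: "TF (S i)" if "i \<in> {1..n}" for i
  proof -
    have "n - i < n" "n - (n - i) = i" using that by auto
    moreover have "TF (S (n - (n - i)))" using TFn \<open>n - i < n\<close> by blast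
    ultimately show ?thesis by simp
  qed
  have colI: "\<forall>i. 1 \<le> i \<longrightarrow> i \<le> n \<longrightarrow> (\<exists>c. col d (S i) c)"
  proof
    fix i show "1 \<le> i \<longrightarrow> i \<le> n \<longrightarrow> (\<exists>c. col d (S i) c)"
    proof (induction i)
      case 0 show ?case by simp
    next
      case (Suc i)
      show ?case
      proof (intro impI)
        assume i: "1 \<le> Suc i" "Suc i \<le> n"
        show "\<exists>c. col d (S (Suc i)) c"
        proof (cases "i = 0")
          case True
          obtain a where a: "tV (S 1) = {a}" using S1 card_1_singletonE by blast
          have t1: "is_trigraph (S 1)" using St[of 1] n1 by simp
          have noedge: "\<forall>x\<in>tV (S 1). \<forall>y\<in>tV (S 1). {x,y} \<notin> tB (S 1) \<union> tR (S 1)"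
          proof (intro ballI notI)
            fix x y assume xy: "x \<in> tV (S 1)" "y \<in> tV (S 1)" "{x,y} \<in> tB (S 1) \<union> tR (S 1)"
            have "x = a" "y = a" using xy(1,2) a by auto
            moreover have "x \<noteq> y" using trig_edge(1)[OF t1 xy(3)] .
            ultimately show False by simp
          qed
          have "col d (S 1) (\<lambda>_. 0)" unfolding col_def using noedge by simp
          then show ?thesis using True by auto
        next
          case False
          then obtain c' where c': "col d (S i) c'" using Suc.IH i by auto
          have i2: "Suc i \<in> {2..n}" using False i by auto
          obtain u v z where C: "contraction (S (Suc i)) u v z (S i)" using Sc[OF i2] by auto
          have "i \<in> {1..n}" "Suc i \<in> {1..n}" using False i by auto
          then show ?thesis using col_step[OF C St St TFi Sdd c'] by blast
        qed
      qed
    qed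
  qed
  then obtain c where c: "col d (S n) c" using n1 by blast
  have pc: "proper_coloring V E c" using c Sn unfolding col_def proper_coloring_def tV_def tB_def tR_def by simp
  have "c ` V \<subseteq> {..d+1}" using c Sn unfolding col_def tV_def by auto
  then have "card (c ` V) \<le> card {..d+1}" by (rule card_mono[OF finite_atMost])
  then show ?thesis using pc by auto
qed

end
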